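(* Let $\alpha\in(0,1)$ and let $K\colon\Delta\to\mathbb R$ be a continuous nowhere vanishing function with $K(x,y)=a(x)b(y)$ for some functions $a,b$. Then $I^\alpha_K$ is injective (on integrable functions on $[0,1]$) and $$f(x)=-b(x)^{-1}c_\alpha^{-1}\frac{d}{dx}I^{1-\alpha}_LI^\alpha_Kf(x),$$ where $L(x,y)=1/a(y)$.
   Context: $\Delta=\{(x,y);0\leq x\leq y\leq1\}$. For a kernel $K$ on $\Delta$ and $\beta\in[0,1)$, $I^\beta_Kf(x)=\int_x^1(y-x)^{-\beta}K(x,y)f(y)\,dy$ and $I^\beta_Kf(1)=0$. $c_\alpha=\pi/\sin(\alpha\pi)$. *)

theory Defs
  imports "HOL-Analysis.Analysis"
begin

definition Delta :: "(real \<times> real) set" where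
  "Delta = {(x, y). 0 \<le> x \<and> x \<le> y \<and> y \<le> 1}"

definition frac_int :: "real \<Rightarrow> (real \<Rightarrow> real \<Rightarrow> real) \<Rightarrow> (real \<Rightarrow> real) \<Rightarrow> real \<Rightarrow> real" where
  "frac_int \<beta> K f x =
     (if x = 1 then 0 else integral {x..1} (\<lambda>y. (y - x) powr (- \<beta>) * K x y * f y))"

definition c_const :: "real \<Rightarrow> real" where
  "c_const \<alpha> = pi / sin (\<alpha> * pi)"

end

theory Submission
  imports Defs
begin

lemma abs_cont_integral:
  fixes g :: "real \<Rightarrow> real"
  assumes g: "g absolutely_integrable_on UNIV" and e: "e > 0"
  obtains d where "d > 0" "\<And>A. A \<in> lmeasurable \<Longrightarrow> measure lebesgue A < d \<Longrightarrow>
      integral A (\<lambda>x. \<bar>g x\<bar>) < e"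
proof -
  define h where "h k x = \<bar>g x\<bar> - min (\<bar>g x\<bar>) (real k)" for k x
  have ag: "(\<lambda>x. \<bar>g x\<bar>) absolutely_integrable_on UNIV"
    using g by (simp add: abs_absolutely_integrableI_1 absolutely_integrable_on_def)
  have mg: "g \<in> borel_measurable lebesgue"
    using absolutely_integrable_imp_borel_measurable[OF g] by simp
  have hint: "h k absolutely_integrable_on UNIV" for k
  proof -
    have "h k \<in> borel_measurable lebesgue" unfolding h_def using mg by measurable
    moreover have "norm (h k x) \<le> \<bar>g x\<bar>" for x by (auto simp: h_def)
    ultimately show ?thesis
      using measurable_bounded_by_integrable_imp_absolutely_integrable[of "h k" UNIV "\<lambda>x. \<bar>g x\<bar>"]
        ag absolutely_integrable_on_def by auto
  qed
  have "(\<lambda>k. integral UNIV (h k)) \<longlonglongrightarrow> integral UNIV (\<lambda>x::real. 0::real)"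
  proof (rule Equivalence_Lebesgue_Henstock_Integration.dominated_convergence(2)[of h UNIV "\<lambda>x. \<bar>g x\<bar>" "\<lambda>x. 0"])
    show "h k integrable_on UNIV" for k using hint absolutely_integrable_on_def by blast
    show "(\<lambda>x. \<bar>g x\<bar>) integrable_on UNIV" using ag absolutely_integrable_on_def by blast
    show "norm (h k x) \<le> \<bar>g x\<bar>" for k x by (auto simp: h_def)
    show "(\<lambda>k. h k x) \<longlonglongrightarrow> 0" for x
    proof (rule tendsto_eventually)
      obtain N :: nat where "\<bar>g x\<bar> \<le> N" using real_arch_simple by blast
      then show "\<forall>\<^sub>F k in sequentially. h k x = 0"
        by (auto simp: h_def eventually_sequentially intro!: exI[of _ N])
    qed
  qed
  then obtain N where N: "integral UNIV (h N) < e/2"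
  proof -
    assume *: "(\<lambda>k. integral UNIV (h k)) \<longlonglongrightarrow> integral UNIV (\<lambda>x::real. 0::real)"
    have "e/2 > 0" using e by simp
    from LIMSEQ_D[OF * this] obtain N where "\<bar>integral UNIV (h N)\<bar> < e/2" by auto
    then show ?thesis using that by (meson abs_less_iff)
  qed
  show ?thesis
  proof (rule that[of "e / (2 * (real N + 1))"])
    show "e / (2 * (real N + 1)) > 0" using e by simp
    fix A :: "real set" assume A: "A \<in> lmeasurable" "measure lebesgue A < e / (2 * (real N + 1))"
    have hA: "h N absolutely_integrable_on A"
      by (rule set_integrable_subset[OF hint]) (use A in auto)
    have hA': "h N integrable_on A" using hA absolutely_integrable_on_def by blast
    have mA: "(\<lambda>x. min \<bar>g x\<bar> (real N)) absolutely_integrable_on A"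
    proof -
      have "(\<lambda>x. \<bar>g x\<bar>) absolutely_integrable_on A"
        by (rule set_integrable_subset[OF ag]) (use A in auto)
      then have "(\<lambda>x. \<bar>g x\<bar> - h N x) absolutely_integrable_on A"
        using hA by (rule set_integral_diff)
      then show ?thesis by (simp add: h_def)
    qed
    have "integral A (\<lambda>x. \<bar>g x\<bar>) = integral A (h N) + integral A (\<lambda>x. min \<bar>g x\<bar> (real N))"
      using integral_add[OF hA' mA[unfolded absolutely_integrable_on_def, THEN conjunct1]]
      by (simp add: h_def)
    also have "integral A (h N) \<le> integral UNIV (h N)"
      by (rule integral_subset_le) (use hA' hint absolutely_integrable_on_def in \<open>auto simp: h_def\<close>)
    also have "integral A (\<lambda>x. min \<bar>g x\<bar> (real N)) \<le> integral A (\<lambda>x. real N)"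
      by (rule integral_le) (use mA absolutely_integrable_on_def A integrable_on_const in auto)
    also have "integral A (\<lambda>x. real N) = real N * measure lebesgue A"
      using A integral_mult_right[of A "real N" "\<lambda>x. 1"] by (simp add: lmeasure_integral)
    also have "real N * measure lebesgue A \<le> real N * (e / (2 * (real N + 1)))"
      using A by (intro mult_left_mono) auto
    also have "real N * (e / (2 * (real N + 1))) < e/2"
      using e by (simp add: field_simps)
    finally show "integral A (\<lambda>x. \<bar>g x\<bar>) < e" using N by linarith
  qed
qed

lemma measure_ball_real: "r \<ge> 0 \<Longrightarrow> measure lebesgue (ball (x::real) r) = 2 * r"
  unfolding ball_eq_greaterThanLessThan by simp

lemma content_ball_real: "r \<ge> 0 \<Longrightarrow> Henstock_Kurzweil_Integration.content (ball (x::real) r) = 2 * r"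
  using measure_ball_real by simp

lemma vitali_bad:
  fixes g :: "real \<Rightarrow> real"
  assumes g: "g absolutely_integrable_on UNIV" and ab: "a < b"
    and AC: "\<And>e. e > 0 \<Longrightarrow> \<exists>d>0. \<forall>A. A \<in> lmeasurable \<longrightarrow> measure lebesgue A < d \<longrightarrow>
      integral A (\<lambda>x. \<bar>g x\<bar>) < e"
  shows "negligible {x. x \<in> ball 0 R \<and> g x < a \<and>
           (\<forall>d>0. \<exists>r. 0 < r \<and> r < d \<and> b * (2*r) < integral (ball x r) g)}"
    (is "negligible ?S")
proof -
  define M where "M = {x. g x < a}"
  have mg: "g \<in> borel_measurable lebesgue"
    using absolutely_integrable_imp_borel_measurable[OF g] by simp
  have M: "M \<in> sets lebesgue"
    unfolding M_def using mg borel_measurable_iff_less[of g lebesgue] by auto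
  have gint: "g integrable_on A" if "A \<in> sets lebesgue" for A
    using set_integrable_subset[OF g that] absolutely_integrable_on_def by blast
  have agint: "(\<lambda>x. \<bar>g x\<bar>) integrable_on A" if "A \<in> sets lebesgue" for A
    using set_integrable_subset[OF g that] unfolding absolutely_integrable_on_def by (simp add: real_norm_def)
  show ?thesis
    unfolding negligible_outer_le
  proof (intro allI impI)
    fix e :: real assume e: "e > 0"
    define \<eta> where "\<eta> = e * (b - a) / 2"
    have \<eta>: "\<eta> > 0" using e ab by (simp add: \<eta>_def)
    obtain \<delta> where \<delta>: "\<delta> > 0" and \<delta>A: "\<And>A. A \<in> lmeasurable \<Longrightarrow> measure lebesgue A < \<delta> \<Longrightarrow>
      integral A (\<lambda>x. \<bar>g x\<bar>) < \<eta>" using AC[OF \<eta>] by blast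
    define \<delta>' where "\<delta>' = min \<delta> (\<eta> / (\<bar>a\<bar> + 1))"
    have \<delta>': "\<delta>' > 0" using \<delta> \<eta> by (simp add: \<delta>'_def)
    obtain U where U: "open U" "M \<subseteq> U" "(U - M) \<in> lmeasurable"
        and Ue: "emeasure lebesgue (U - M) < ennreal \<delta>'"
      using sets_lebesgue_outer_open[OF M \<delta>'] by blast
    have UM: "measure lebesgue (U - M) < \<delta>'"
    proof -
      have "ennreal (measure lebesgue (U - M)) < ennreal \<delta>'"
        using Ue emeasure_eq_measure2[OF U(3)] by simp
      then show ?thesis using \<delta>' by (simp add: ennreal_less_iff)
    qed
    define U' where "U' = U \<inter> ball 0 R"
    have U': "open U'" using U by (simp add: U'_def open_Int)
    define Kf where "Kf = {(x,r). x \<in> ?S \<and> 0 < r \<and> ball x r \<subseteq> U' \<and> b * (2*r) < integral (ball x r) g}"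
    have cover: "\<exists>i. i \<in> Kf \<and> x \<in> ball (fst i) (snd i) \<and> snd i < d" if xS: "x \<in> ?S" "d > 0" for x d
    proof -
      have "x \<in> U'" using xS U(2) by (auto simp: U'_def M_def)
      then obtain \<rho> where \<rho>: "\<rho> > 0" "ball x \<rho> \<subseteq> U'" using U' open_contains_ball by blast
      obtain r where r: "0 < r" "r < min d \<rho>" "b * (2*r) < integral (ball x r) g"
      proof -
        have "min d \<rho> > 0" using xS \<rho> by simp
        then show ?thesis using xS(1) that by blast
      qed
      have "ball x r \<subseteq> U'" using \<rho> r by (meson dual_order.trans min_less_iff_conj order_less_imp_le subset_ball)
      then show ?thesis using r xS by (intro exI[of _ "(x,r)"]) (auto simp: Kf_def)
    qed
    obtain C where C: "countable C" "C \<subseteq> Kf"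
      and Cdis: "pairwise (\<lambda>i j. disjnt (ball (fst i) (snd i)) (ball (fst j) (snd j))) C"
      and Cneg: "negligible (?S - (\<Union>i\<in>C. ball (fst i) (snd i)))"
      by (rule Vitali_covering_theorem_balls[of ?S Kf fst snd, OF cover]) auto
    have Ci: "ball (fst i) (snd i) \<subseteq> U'" "0 < snd i"
      "b * (2 * snd i) < integral (ball (fst i) (snd i)) g" if "i \<in> C" for i
    proof -
      obtain x r where "i = (x, r)" by fastforce
      then show "ball (fst i) (snd i) \<subseteq> U'" "0 < snd i"
        "b * (2 * snd i) < integral (ball (fst i) (snd i)) g"
        using that C(2) by (auto simp: Kf_def)
    qed
    define \<D> where "\<D> = (\<lambda>i. ball (fst i) (snd i)) ` C"
    have \<D>sub: "B \<subseteq> U'" if "B \<in> \<D>" for B using that Ci by (auto simp: \<D>_def)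
    have \<D>int: "b * measure lebesgue B < integral B g" if "B \<in> \<D>" for B
      using that Ci by (auto simp: \<D>_def content_ball_real less_imp_le)
    have \<D>meas: "B \<in> lmeasurable" if "B \<in> \<D>" for B
      using that by (auto simp: \<D>_def)
    have \<D>dis: "pairwise disjnt \<D>"
      unfolding pairwise_def
    proof (intro ballI impI)
      fix B1 B2 assume "B1 \<in> \<D>" "B2 \<in> \<D>" "B1 \<noteq> B2"
      then obtain i j where "i \<in> C" "j \<in> C" "B1 = ball (fst i) (snd i)" "B2 = ball (fst j) (snd j)" "i \<noteq> j"
        by (auto simp: \<D>_def)
      then show "disjnt B1 B2" using Cdis by (auto simp: pairwise_def)
    qed
    have bound: "measure lebesgue (\<Union>D') \<le> e" if D': "D' \<subseteq> \<D>" "finite D'" for D'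
    proof -
      define V where "V = \<Union>D'"
      have Vs: "V \<in> lmeasurable" using D' \<D>meas by (auto simp: V_def)
      have VM: "V \<inter> M \<in> lmeasurable" "V - M \<in> lmeasurable"
        using Vs M by (auto intro: fmeasurable_Int_fmeasurable fmeasurable_Diff)
      have VU: "V \<subseteq> U" using D' \<D>sub by (auto simp: V_def U'_def)
      have negl: "pairwise (\<lambda>S T. negligible (S \<inter> T)) D'"
        using pairwise_subset[OF \<D>dis D'(1)] by (auto simp: pairwise_def disjnt_def)
      have "(g has_integral (\<Sum>B\<in>D'. integral B g)) V"
        unfolding V_def
        by (rule has_integral_Union[OF D'(2) _ negl]) (use D' \<D>meas gint in \<open>auto intro!: integrable_integral\<close>)
      then have IV: "integral V g = (\<Sum>B\<in>D'. integral B g)" by blast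
      have mV: "measure lebesgue V = (\<Sum>B\<in>D'. measure lebesgue B)"
        unfolding V_def by (rule measure_negligible_finite_Union[OF D'(2) _ negl]) (use D' \<D>meas in auto)
      have "b * measure lebesgue V = (\<Sum>B\<in>D'. b * measure lebesgue B)"
        by (simp add: mV sum_distrib_left)
      also have "\<dots> \<le> (\<Sum>B\<in>D'. integral B g)"
        by (rule sum_mono) (use D' \<D>int in \<open>auto intro: less_imp_le\<close>)
      also have "\<dots> = integral V g" using IV by simp
      also have "integral V g = integral (V \<inter> M) g + integral (V - M) g"
      proof -
        have "V = (V \<inter> M) \<union> (V - M)" by blast
        then have "integral V g = integral ((V \<inter> M) \<union> (V - M)) g" by simp
        also have "\<dots> = integral (V \<inter> M) g + integral (V - M) g"
        proof (rule integral_Un)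
          have "V \<inter> M \<inter> (V - M) = {}" by blast
          then show "negligible (V \<inter> M \<inter> (V - M))" by simp
        qed (use Vs M gint in auto)
        finally show ?thesis .
      qed
      also have "integral (V \<inter> M) g \<le> integral (V \<inter> M) (\<lambda>x. a)"
        by (rule integral_le) (use VM M gint in \<open>auto simp: M_def intro!: integrable_on_const\<close>)
      also have "integral (V \<inter> M) (\<lambda>x. a) = a * measure lebesgue (V \<inter> M)"
        using integral_mult_right[of "V \<inter> M" a "\<lambda>x. 1"] VM lmeasure_integral[of "V \<inter> M"]
        by simp
      also have "integral (V - M) g \<le> integral (V - M) (\<lambda>x. \<bar>g x\<bar>)"
        by (rule integral_le) (use Vs M gint agint in auto)
      also have "integral (V - M) (\<lambda>x. \<bar>g x\<bar>) \<le> integral (U - M) (\<lambda>x. \<bar>g x\<bar>)"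
        by (rule integral_subset_le) (use Vs M U VU agint in auto)
      also have "integral (U - M) (\<lambda>x. \<bar>g x\<bar>) < \<eta>"
        using \<delta>A[OF U(3)] UM by (simp add: \<delta>'_def)
      also have "a * measure lebesgue (V \<inter> M) \<le> a * measure lebesgue V + \<eta>"
      proof -
        have mVM: "measure lebesgue V = measure lebesgue (V \<inter> M) + measure lebesgue (V - M)"
        proof -
          have "V = (V \<inter> M) \<union> (V - M)" by blast
          then have "measure lebesgue V = measure lebesgue ((V \<inter> M) \<union> (V - M))" by simp
          also have "\<dots> = measure lebesgue (V \<inter> M) + measure lebesgue ((V - M) - (V \<inter> M))"
            using measure_Un2[OF VM] .
          also have "(V - M) - (V \<inter> M) = V - M" by blast
          finally show ?thesis .
        qed
        have "measure lebesgue (V - M) \<le> measure lebesgue (U - M)"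
          by (rule measure_mono_fmeasurable) (use VU U M VM in auto)
        then have "measure lebesgue (V - M) < \<delta>'" using UM by linarith
        moreover have "\<delta>' * \<bar>a\<bar> \<le> \<eta>"
        proof -
          have "\<delta>' \<le> \<eta> / (\<bar>a\<bar> + 1)" by (simp add: \<delta>'_def)
          then have "\<delta>' * (\<bar>a\<bar> + 1) \<le> \<eta>" by (simp add: field_simps)
          then show ?thesis using \<delta>' by (simp add: algebra_simps)
        qed
        ultimately have A1: "\<bar>a\<bar> * measure lebesgue (V - M) \<le> \<eta>"
          using mult_left_mono[of "measure lebesgue (V - M)" "\<delta>'" "\<bar>a\<bar>"] by (simp add: mult.commute)
        have A2: "- (a * measure lebesgue (V - M)) \<le> \<bar>a\<bar> * measure lebesgue (V - M)"
          using measure_nonneg[of lebesgue "V - M"] abs_ge_self[of "-a"]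
          by (metis abs_minus_cancel minus_mult_left mult_right_mono)
        have "a * measure lebesgue (V \<inter> M) = a * measure lebesgue V - a * measure lebesgue (V - M)"
          using mVM by (simp add: algebra_simps)
        then show ?thesis using A1 A2 by linarith
      qed
      finally have "b * measure lebesgue V < a * measure lebesgue V + \<eta> + \<eta>" by linarith
      then have "(b - a) * measure lebesgue V < 2 * \<eta>" by (simp add: algebra_simps)
      then have "(b - a) * measure lebesgue V < (b - a) * e" by (simp add: \<eta>_def mult.commute)
      then show ?thesis using ab by (simp add: V_def)
    qed
    have W: "\<Union>\<D> \<in> lmeasurable"
    proof (rule bounded_set_imp_lmeasurable)
      have "\<Union>\<D> \<subseteq> ball 0 R" using \<D>sub unfolding U'_def by blast
      then show "bounded (\<Union>\<D>)" using bounded_subset bounded_ball by blast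
      have "open (\<Union>\<D>)" unfolding \<D>_def by (intro open_Union) auto
      then show "\<Union>\<D> \<in> sets lebesgue" by simp
    qed
    have mW: "measure lebesgue (\<Union>\<D>) \<le> e"
    proof (rule field_le_epsilon)
      fix e' :: real assume "e' > 0"
      have "countable \<D>" using C(1) by (simp add: \<D>_def)
      then obtain D' where D': "D' \<subseteq> \<D>" "finite D'" "measure lebesgue (\<Union>\<D>) - e' < measure lebesgue (\<Union>D')"
        using measure_countable_Union_approachable[of \<D> e' e] \<D>meas bound \<open>e' > 0\<close>
        by blast
      then show "measure lebesgue (\<Union>\<D>) \<le> e + e'" using bound[OF D'(1,2)] by linarith
    qed
    define T where "T = (?S - \<Union>\<D>) \<union> \<Union>\<D>"
    have N: "(?S - \<Union>\<D>) \<in> lmeasurable" "measure lebesgue (?S - \<Union>\<D>) = 0"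
      using Cneg negligible_imp_measurable negligible_imp_measure0 unfolding \<D>_def by auto
    show "\<exists>T. ?S \<subseteq> T \<and> T \<in> lmeasurable \<and> measure lebesgue T \<le> e"
    proof (intro exI conjI)
      show "?S \<subseteq> T" by (auto simp: T_def)
      show "T \<in> lmeasurable" using fmeasurable.Un[OF N(1) W] unfolding T_def .
      have "measure lebesgue T \<le> measure lebesgue (?S - \<Union>\<D>) + measure lebesgue (\<Union>\<D>)"
        unfolding T_def by (rule measure_Un_le) (use N W in auto)
      then show "measure lebesgue T \<le> e" using N mW by linarith
    qed
  qed
qed

lemma avg_upper:
  fixes g :: "real \<Rightarrow> real"
  assumes g: "g absolutely_integrable_on UNIV"
  obtains N where "negligible N"
    "\<And>x c. x \<notin> N \<Longrightarrow> g x < c \<Longrightarrow>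
        \<exists>d>0. \<forall>r. 0 < r \<and> r < d \<longrightarrow> integral (ball x r) g \<le> c * (2 * r)"
proof -
  have AC: "\<And>e. e > 0 \<Longrightarrow> \<exists>d>0. \<forall>A. A \<in> lmeasurable \<longrightarrow> measure lebesgue A < d \<longrightarrow>
      integral A (\<lambda>x. \<bar>g x\<bar>) < e"
  proof -
    fix e :: real assume "e > 0"
    from abs_cont_integral[OF g this] obtain d where "d > 0" "\<And>A. A \<in> lmeasurable \<Longrightarrow> measure lebesgue A < d \<Longrightarrow>
      integral A (\<lambda>x. \<bar>g x\<bar>) < e" by blast
    then show "\<exists>d>0. \<forall>A. A \<in> lmeasurable \<longrightarrow> measure lebesgue A < d \<longrightarrow>
      integral A (\<lambda>x. \<bar>g x\<bar>) < e" by blast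
  qed
  define S where "S = (\<lambda>(a::real,b::real,n::nat). {x. x \<in> ball 0 (real n) \<and> g x < a \<and>
           (\<forall>d>0. \<exists>r. 0 < r \<and> r < d \<and> b * (2*r) < integral (ball x r) g)})"
  define I :: "(real \<times> real \<times> nat) set" where "I = {(a,b,n). a \<in> \<rat> \<and> b \<in> \<rat> \<and> a < b}"
  define N where "N = \<Union>(S ` I)"
  show ?thesis
  proof
    have "countable I"
    proof -
      have "I \<subseteq> \<rat> \<times> \<rat> \<times> (UNIV :: nat set)" by (auto simp: I_def)
      moreover have "countable (\<rat> \<times> \<rat> \<times> (UNIV :: nat set))"
        by (intro countable_SIGMA countable_rat) auto
      ultimately show ?thesis using countable_subset by blast
    qed
    moreover have "negligible (S i)" if "i \<in> I" for i
    proof -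
      obtain a b n where i: "i = (a,b,n)" by (cases i) auto
      then have "a < b" using that by (auto simp: I_def)
      then show ?thesis unfolding i S_def using vitali_bad[OF g _ AC] by simp
    qed
    ultimately show "negligible N" unfolding N_def
      by (intro negligible_countable_Union) auto
  next
    fix x c assume x: "x \<notin> N" and c: "g x < c"
    obtain a where a: "a \<in> \<rat>" "g x < a" "a < c" using Rats_dense_in_real[OF c] by blast
    obtain b where b: "b \<in> \<rat>" "a < b" "b < c" using Rats_dense_in_real[OF a(3)] by blast
    obtain n :: nat where n: "\<bar>x\<bar> < real n" using reals_Archimedean2[of "\<bar>x\<bar>"] by blast
    have "(a,b,n) \<in> I" using a b by (auto simp: I_def)
    then have "x \<notin> S (a,b,n)" using x by (auto simp: N_def)
    then obtain d where d: "d > 0" "\<And>r. 0 < r \<Longrightarrow> r < d \<Longrightarrow> integral (ball x r) g \<le> b * (2*r)"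
      using n a by (auto simp: S_def not_less) (meson not_less)
    show "\<exists>d>0. \<forall>r. 0 < r \<and> r < d \<longrightarrow> integral (ball x r) g \<le> c * (2 * r)"
    proof (intro exI[of _ d] conjI allI impI)
      fix r assume r: "0 < r \<and> r < d"
      then have "b * (2*r) \<le> c * (2*r)" using b by simp
      then show "integral (ball x r) g \<le> c * (2 * r)" using d(2)[of r] r by linarith
    qed (use d in auto)
  qed
qed

lemma abs_diff_const_ai:
  fixes h :: "real \<Rightarrow> real"
  assumes h: "h absolutely_integrable_on {0..1}"
  shows "(\<lambda>y. \<bar>h y - q\<bar>) absolutely_integrable_on {0..1}"
proof -
  have "(\<lambda>y. h y - q) absolutely_integrable_on {0..1}"
    using set_integral_diff(1)[OF h absolutely_integrable_on_const[of "{0..1::real}" q]] by simp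
  then show ?thesis using set_integrable_abs by blast
qed

lemma ai_sub01:
  fixes f :: "real \<Rightarrow> real"
  assumes "f absolutely_integrable_on {0..1}" "A \<in> sets lebesgue" "A \<subseteq> {0..1}"
  shows "f integrable_on A"
  using set_integrable_subset[OF assms] absolutely_integrable_on_def by blast

lemma lebesgue_points:
  fixes h :: "real \<Rightarrow> real"
  assumes h: "h absolutely_integrable_on {0..1}"
  obtains N where "negligible N"
    "\<And>x e. x \<in> {0<..<1} \<Longrightarrow> x \<notin> N \<Longrightarrow> e > 0 \<Longrightarrow>
       \<exists>d>0. \<forall>r. 0 < r \<and> r < d \<longrightarrow> integral (ball x r) (\<lambda>y. \<bar>h y - h x\<bar>) \<le> e * r"
proof -
  define gq where "gq q y = (if y \<in> {0..1} then \<bar>h y - q\<bar> else 0)" for q y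
  have gq: "gq q absolutely_integrable_on UNIV" for q
    unfolding gq_def using absolutely_integrable_restrict_UNIV[of "{0..1}" "\<lambda>y. \<bar>h y - q\<bar>"] abs_diff_const_ai[OF h, of q] by simp
  have "\<forall>q. \<exists>N. negligible N \<and> (\<forall>x c. x \<notin> N \<longrightarrow> gq q x < c \<longrightarrow>
        (\<exists>d>0. \<forall>r. 0 < r \<and> r < d \<longrightarrow> integral (ball x r) (gq q) \<le> c * (2 * r)))"
  proof
    fix q
    obtain N where "negligible N"
      "\<And>x c. x \<notin> N \<Longrightarrow> gq q x < c \<Longrightarrow>
        \<exists>d>0. \<forall>r. 0 < r \<and> r < d \<longrightarrow> integral (ball x r) (gq q) \<le> c * (2 * r)"
      using avg_upper[OF gq] by blast
    then show "\<exists>N. negligible N \<and> (\<forall>x c. x \<notin> N \<longrightarrow> gq q x < c \<longrightarrow>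
        (\<exists>d>0. \<forall>r. 0 < r \<and> r < d \<longrightarrow> integral (ball x r) (gq q) \<le> c * (2 * r)))" by blast
  qed
  then obtain NN where NN: "\<And>q. negligible (NN q)"
    "\<And>q x c. x \<notin> NN q \<Longrightarrow> gq q x < c \<Longrightarrow>
        \<exists>d>0. \<forall>r. 0 < r \<and> r < d \<longrightarrow> integral (ball x r) (gq q) \<le> c * (2 * r)"
    by metis
  show ?thesis
  proof
    show "negligible (\<Union>(NN ` \<rat>))"
      by (intro negligible_countable_Union) (auto simp: countable_rat NN(1))
  next
    fix x e assume x: "x \<in> {0<..<1}" "x \<notin> \<Union>(NN ` \<rat>)" and e: "(e::real) > 0"
    obtain q where q: "q \<in> \<rat>" "h x - e/4 < q" "q < h x"
      using Rats_dense_in_real[of "h x - e/4" "h x"] e by auto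
    have xq: "x \<notin> NN q" using x q by auto
    have "gq q x < e/4" using x q by (auto simp: gq_def)
    then obtain d where d: "d > 0" "\<And>r. 0 < r \<Longrightarrow> r < d \<Longrightarrow> integral (ball x r) (gq q) \<le> e/4 * (2 * r)"
      using NN(2)[OF xq] by blast
    show "\<exists>d>0. \<forall>r. 0 < r \<and> r < d \<longrightarrow> integral (ball x r) (\<lambda>y. \<bar>h y - h x\<bar>) \<le> e * r"
    proof (intro exI[of _ "min d (min x (1 - x))"] conjI allI impI)
      show "min d (min x (1 - x)) > 0" using d x by auto
      fix r assume r: "0 < r \<and> r < min d (min x (1 - x))"
      have B: "ball x r \<subseteq> {0..1}"
      proof
        fix y assume "y \<in> ball x r"
        then have "\<bar>x - y\<bar> < r" by (simp add: dist_real_def)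
        then show "y \<in> {0..1}" using r by auto
      qed
      have Bs: "ball x r \<in> sets lebesgue" "ball x r \<in> lmeasurable" by auto
      have i1: "(\<lambda>y. \<bar>h y - q\<bar>) integrable_on ball x r"
        by (rule ai_sub01[OF abs_diff_const_ai[OF h] Bs(1) B])
      have i2: "(\<lambda>y. \<bar>h y - h x\<bar>) integrable_on ball x r"
        by (rule ai_sub01[OF abs_diff_const_ai[OF h] Bs(1) B])
      have i3: "(\<lambda>y. \<bar>h x - q\<bar>) integrable_on ball x r"
        using Bs(2) by (rule integrable_on_const)
      have "integral (ball x r) (\<lambda>y. \<bar>h y - h x\<bar>) \<le> integral (ball x r) (\<lambda>y. \<bar>h y - q\<bar> + \<bar>h x - q\<bar>)"
        by (rule integral_le) (use i1 i2 i3 integrable_add[OF i1 i3] in auto)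
      also have "\<dots> = integral (ball x r) (\<lambda>y. \<bar>h y - q\<bar>) + integral (ball x r) (\<lambda>y. \<bar>h x - q\<bar>)"
        by (rule integral_add[OF i1 i3])
      also have "integral (ball x r) (\<lambda>y. \<bar>h y - q\<bar>) = integral (ball x r) (gq q)"
        by (rule integral_cong) (use B in \<open>auto simp: gq_def\<close>)
      also have "integral (ball x r) (\<lambda>y. \<bar>h x - q\<bar>) = \<bar>h x - q\<bar> * (2 * r)"
      proof -
        have "integral (ball x r) (\<lambda>y. \<bar>h x - q\<bar>) = \<bar>h x - q\<bar> * integral (ball x r) (\<lambda>y. 1)"
          using integral_mult_right[of "ball x r" "\<bar>h x - q\<bar>" "\<lambda>y. 1"] by simp
        also have "integral (ball x r) (\<lambda>y. 1) = 2 * r"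
          using lmeasure_integral[OF Bs(2)] measure_ball_real[of r x] r by simp
        finally show ?thesis .
      qed
      also have "integral (ball x r) (gq q) \<le> e/4 * (2 * r)" using d(2)[of r] r by simp
      also have "\<bar>h x - q\<bar> * (2 * r) \<le> e/4 * (2 * r)"
        using q r by (intro mult_right_mono) auto
      finally show "integral (ball x r) (\<lambda>y. \<bar>h y - h x\<bar>) \<le> e * r" by simp
    qed
  qed
qed

lemma deriv_at_lp:
  fixes h :: "real \<Rightarrow> real"
  assumes h: "h absolutely_integrable_on {0..1}" and x: "x \<in> {0<..<1}"
    and lp: "\<And>e. e > 0 \<Longrightarrow> \<exists>d>0. \<forall>r. 0 < r \<and> r < d \<longrightarrow>
               integral (ball x r) (\<lambda>y. \<bar>h y - h x\<bar>) \<le> e * r"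
  shows "((\<lambda>t. integral {t..1} h) has_real_derivative - h x) (at x)"
  unfolding DERIV_def LIM_eq
proof (intro allI impI)
  fix e :: real assume e: "e > 0"
  obtain d where d: "d > 0" "\<And>r. 0 < r \<Longrightarrow> r < d \<Longrightarrow>
      integral (ball x r) (\<lambda>y. \<bar>h y - h x\<bar>) \<le> e/4 * r"
    using lp[of "e/4"] e by auto
  define G where "G t = integral {t..1} h" for t
  have hint: "h integrable_on {a..b}" if "0 \<le> a" "b \<le> 1" for a b
    using ai_sub01[OF h, of "{a..b}"] that by auto
  have hxint: "(\<lambda>y. h y - h x) integrable_on {a..b}" if "0 \<le> a" "b \<le> 1" for a b
    using integrable_diff[OF hint[OF that] integrable_const_ivl[of "h x" a b]] by simp
  have est: "\<bar>integral {a..b} (\<lambda>y. h y - h x)\<bar> \<le> e/4 * \<rho>"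
    if ab: "a \<le> b" "{a..b} \<subseteq> ball x \<rho>" "0 < \<rho>" "\<rho> < d" "ball x \<rho> \<subseteq> {0..1}" for a b \<rho>
  proof -
    have "a \<in> {a..b}" "b \<in> {a..b}" using ab(1) by auto
    then have "a \<in> {0..1}" "b \<in> {0..1}" using ab(2,5) by blast+
    then have a0: "0 \<le> a" "b \<le> 1" by auto
    have Bs: "ball x \<rho> \<in> sets lebesgue" by auto
    have i2: "(\<lambda>y. \<bar>h y - h x\<bar>) integrable_on ball x \<rho>"
      by (rule ai_sub01[OF abs_diff_const_ai[OF h] Bs ab(5)])
    have i3: "(\<lambda>y. \<bar>h y - h x\<bar>) integrable_on {a..b}"
      using ai_sub01[OF abs_diff_const_ai[OF h], of "{a..b}"] a0 by auto
    have "\<bar>integral {a..b} (\<lambda>y. h y - h x)\<bar> \<le> integral {a..b} (\<lambda>y. \<bar>h y - h x\<bar>)"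
      using integral_norm_bound_integral[OF hxint[OF a0] i3] by simp
    also have "\<dots> \<le> integral (ball x \<rho>) (\<lambda>y. \<bar>h y - h x\<bar>)"
      by (rule integral_subset_le) (use ab i2 i3 in auto)
    also have "\<dots> \<le> e/4 * \<rho>" using d(2) ab by auto
    finally show ?thesis .
  qed
  define s where "s = min (d/2) (min x (1 - x) / 2)"
  show "\<exists>s>0. \<forall>k. k \<noteq> 0 \<and> norm (k - 0) < s \<longrightarrow>
      norm ((integral {x + k..1} h - integral {x..1} h) / k - - h x) < e"
  proof (intro exI[of _ s] conjI allI impI)
    show "s > 0" using d x by (auto simp: s_def)
    fix k :: real assume k: "k \<noteq> 0 \<and> norm (k - 0) < s"
    have ballsub: "ball x (2 * \<bar>k\<bar>) \<subseteq> {0..1}"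
    proof
      fix y assume "y \<in> ball x (2 * \<bar>k\<bar>)"
      then have "\<bar>x - y\<bar> < 2 * \<bar>k\<bar>" by (simp add: dist_real_def)
      then show "y \<in> {0..1}" using k x by (auto simp: s_def)
    qed
    have rho: "0 < 2 * \<bar>k\<bar>" "2 * \<bar>k\<bar> < d" using k by (auto simp: s_def)
    have key: "\<bar>integral {x + k..1} h - integral {x..1} h + k * h x\<bar> \<le> e/4 * (2 * \<bar>k\<bar>)"
    proof (cases "k > 0")
      case True
      have x1: "x + k \<le> 1" using k x by (auto simp: s_def)
      have "integral {x..x+k} h + integral {x+k..1} h = integral {x..1} h"
        by (rule Henstock_Kurzweil_Integration.integral_combine) (use True x1 x hint in auto)
      moreover have "integral {x..x+k} (\<lambda>y. h y - h x) = integral {x..x+k} h - k * h x"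
      proof -
        have hk: "h integrable_on {x..x+k}" using hint[of x "x+k"] x x1 by auto
        show ?thesis using integral_diff[OF hk integrable_const_ivl[of "h x" x "x+k"]] True
          by (simp add: integral_const_real)
      qed
      moreover have "\<bar>integral {x..x+k} (\<lambda>y. h y - h x)\<bar> \<le> e/4 * (2 * \<bar>k\<bar>)"
      proof -
        have sub1: "{x..x+k} \<subseteq> ball x (2*\<bar>k\<bar>)"
        proof
          fix y assume "y \<in> {x..x+k}"
          then have "\<bar>x - y\<bar> < 2*\<bar>k\<bar>" using True by auto
          then show "y \<in> ball x (2*\<bar>k\<bar>)" by (simp add: dist_real_def)
        qed
        show ?thesis by (rule est[OF _ sub1 rho ballsub]) (use True in simp)
      qed
      ultimately show ?thesis by linarith
    next
      case False
      then have kn: "k < 0" using k by auto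
      have x0: "0 \<le> x + k" using k x by (auto simp: s_def)
      have "integral {x+k..x} h + integral {x..1} h = integral {x+k..1} h"
        by (rule Henstock_Kurzweil_Integration.integral_combine) (use kn x0 x hint in auto)
      moreover have "integral {x+k..x} (\<lambda>y. h y - h x) = integral {x+k..x} h + k * h x"
      proof -
        have hk: "h integrable_on {x+k..x}" using hint[of "x+k" x] x x0 by auto
        show ?thesis using integral_diff[OF hk integrable_const_ivl[of "h x" "x+k" x]] kn
          by (simp add: integral_const_real algebra_simps)
      qed
      moreover have "\<bar>integral {x+k..x} (\<lambda>y. h y - h x)\<bar> \<le> e/4 * (2 * \<bar>k\<bar>)"
      proof -
        have sub1: "{x+k..x} \<subseteq> ball x (2*\<bar>k\<bar>)"
        proof
          fix y assume "y \<in> {x+k..x}"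
          then have "\<bar>x - y\<bar> < 2*\<bar>k\<bar>" using kn by auto
          then show "y \<in> ball x (2*\<bar>k\<bar>)" by (simp add: dist_real_def)
        qed
        show ?thesis by (rule est[OF _ sub1 rho ballsub]) (use kn in simp)
      qed
      ultimately show ?thesis by linarith
    qed
    define D where "D = integral {x + k..1} h - integral {x..1} h"
    have kpos: "\<bar>k\<bar> > 0" using k by simp
    have eq: "D / k - - h x = (D + k * h x) / k" using k by (simp add: field_simps)
    have "norm (D / k - - h x) = \<bar>D + k * h x\<bar> / \<bar>k\<bar>"
      by (simp only: eq real_norm_def abs_divide)
    also have "\<dots> \<le> e/4 * (2 * \<bar>k\<bar>) / \<bar>k\<bar>"
      by (rule divide_right_mono) (use key kpos in \<open>simp_all add: D_def\<close>)
    also have "e/4 * (2 * \<bar>k\<bar>) / \<bar>k\<bar> = e/2" using kpos by (simp add: field_simps)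
    also have "e/2 < e" using e by simp
    finally show "norm ((integral {x + k..1} h - integral {x..1} h) / k - - h x) < e"
      unfolding D_def .
  qed
qed

lemma lebesgue_diff:
  fixes h :: "real \<Rightarrow> real"
  assumes h: "h absolutely_integrable_on {0..1}"
  shows "AE x in lborel. x \<in> {0<..<1} \<longrightarrow> ((\<lambda>t. integral {t..1} h) has_real_derivative - h x) (at x)"
proof -
  obtain N where N: "negligible N"
    "\<And>x e. x \<in> {0<..<1} \<Longrightarrow> x \<notin> N \<Longrightarrow> e > 0 \<Longrightarrow>
       \<exists>d>0. \<forall>r. 0 < r \<and> r < d \<longrightarrow> integral (ball x r) (\<lambda>y. \<bar>h y - h x\<bar>) \<le> e * r"
    using lebesgue_points[OF h] by blast
  have "AE x in lebesgue. x \<notin> N"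
    using N(1) by (simp add: negligible_iff_null_sets AE_not_in)
  then have "AE x in lborel. x \<notin> N" by (simp add: AE_completion_iff)
  then show ?thesis
  proof (rule AE_mp, intro AE_I2 impI)
    fix x assume "x \<notin> N" "x \<in> {0<..<1}"
    then show "((\<lambda>t. integral {t..1} h) has_real_derivative - h x) (at x)"
      using deriv_at_lp[OF h] N(2) by blast
  qed
qed

lemma sigma_finite_lebesgue: "sigma_finite_measure (lebesgue :: 'a::euclidean_space measure)"
proof -
  obtain A :: "'a set set" where A: "countable A" "A \<subseteq> sets lborel" "\<Union>A = space lborel" "\<forall>a\<in>A. emeasure lborel a \<noteq> \<infinity>"
    using lborel.sigma_finite_countable by blast
  show ?thesis unfolding sigma_finite_measure_def
    using A by (intro exI[of _ A]) (auto simp: emeasure_completion)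
qed

interpretation leb_pair: pair_sigma_finite "lebesgue :: real measure" "lebesgue :: real measure"
  by (simp add: pair_sigma_finite_def sigma_finite_lebesgue)


lemma
  fixes G :: "real \<Rightarrow> real"
  assumes G: "G \<in> borel_measurable lebesgue"
  shows "(\<lambda>p::real\<times>real. if t \<le> fst p \<and> fst p \<le> snd p then (fst p - t) powr (\<alpha>-1) * (snd p - fst p) powr (-\<alpha>) * G (snd p) else 0)
     \<in> borel_measurable (lebesgue \<Otimes>\<^sub>M lebesgue)"
proof -
  have f: "fst \<in> borel_measurable (lebesgue \<Otimes>\<^sub>M (lebesgue :: real measure))"
    by (rule measurable_compose[OF measurable_fst]) (rule measurable_completion, simp)
  have s: "snd \<in> borel_measurable ((lebesgue :: real measure) \<Otimes>\<^sub>M lebesgue)"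
    by (rule measurable_compose[OF measurable_snd]) (rule measurable_completion, simp)
  have g: "(\<lambda>p. G (snd p)) \<in> borel_measurable ((lebesgue :: real measure) \<Otimes>\<^sub>M lebesgue)"
    by (rule measurable_compose[OF measurable_snd G])
  show ?thesis using f s g by measurable
qed

lemma beta_sub:
  fixes t y \<alpha> :: real
  assumes ty: "t < y" and a: "0 < \<alpha>" "\<alpha> < 1"
  shows "((\<lambda>s. (s-t) powr (\<alpha>-1) * (y-s) powr (-\<alpha>)) has_integral Beta \<alpha> (1-\<alpha>)) {t..y}"
proof -
  define L where "L = y - t"
  have L: "L > 0" using ty by (simp add: L_def)
  define f where "f = (\<lambda>u::real. u powr (\<alpha> - 1) * (1 - u) powr (- \<alpha>))"
  have B: "(f has_integral Beta \<alpha> (1-\<alpha>)) (cbox 0 1)"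
    using has_integral_Beta_real[of \<alpha> "1-\<alpha>"] a by (simp add: f_def)
  have "((\<lambda>x. f ((1/L) *\<^sub>R x + (-t/L))) has_integral (Beta \<alpha> (1-\<alpha>) /\<^sub>R (1/L) ^ DIM(real)))
          (cbox ((0 - (-t/L)) /\<^sub>R (1/L)) ((1 - (-t/L)) /\<^sub>R (1/L)))"
    by (rule has_integral_affinity'[OF B]) (use L in simp)
  moreover have "(0 - (-t/L)) /\<^sub>R (1/L) = t" "(1 - (-t/L)) /\<^sub>R (1/L) = y"
    using L by (simp_all add: L_def field_simps)
  ultimately have "((\<lambda>x. f ((x - t) / L)) has_integral (L * Beta \<alpha> (1-\<alpha>))) {t..y}"
    using L by (simp add: field_simps)
  then have "((\<lambda>x. (1/L) * f ((x - t) / L)) has_integral ((1/L) * (L * Beta \<alpha> (1-\<alpha>)))) {t..y}"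
    by (rule has_integral_mult_right)
  then have I: "((\<lambda>x. (1/L) * f ((x - t) / L)) has_integral Beta \<alpha> (1-\<alpha>)) {t..y}"
    using L by simp
  show ?thesis
  proof (rule has_integral_spike_finite[OF _ _ I, of "{}"])
    fix s assume s: "s \<in> {t..y} - {}"
    have s1: "0 \<le> s - t" "0 \<le> y - s" using s by auto
    have u1: "1 - (s - t) / L = (y - s) / L" using L by (simp add: L_def field_simps)
    have "(1/L) * f ((s - t) / L) = (1/L) * (((s-t) powr (\<alpha>-1) / L powr (\<alpha>-1)) * ((y-s) powr (-\<alpha>) / L powr (-\<alpha>)))"
      unfolding f_def using s1 L by (simp add: powr_divide u1)
    also have "\<dots> = (s-t) powr (\<alpha>-1) * (y-s) powr (-\<alpha>) / (L powr (\<alpha>-1) * L powr (-\<alpha>) * L powr 1)"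
      using L by (simp add: field_simps)
    also have "L powr (\<alpha>-1) * L powr (-\<alpha>) * L powr 1 = L powr ((\<alpha>-1) + (-\<alpha>) + 1)"
      by (simp only: powr_add)
    also have "\<dots> = 1" using L by simp
    finally show "(s-t) powr (\<alpha>-1) * (y-s) powr (-\<alpha>) = (1/L) * f ((s - t) / L)" by simp
  qed simp
qed

lemma beta_reflect:
  fixes \<alpha> :: real
  assumes a: "0 < \<alpha>" "\<alpha> < 1"
  shows "Beta \<alpha> (1 - \<alpha>) = pi / sin (\<alpha> * pi)"
proof -
  have nint: "complex_of_real \<alpha> \<notin> \<int>"
  proof
    assume "complex_of_real \<alpha> \<in> \<int>"
    then obtain n :: int where "complex_of_real \<alpha> = of_int n" by (auto elim: Ints_cases)
    then have "complex_of_real \<alpha> = complex_of_real (of_int n)" by simp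
    then have "\<alpha> = of_int n" by (simp only: of_real_eq_iff)
    then have "0 < n" "n < 1" using a by simp_all
    then show False by linarith
  qed
  have "complex_of_real (Gamma \<alpha> * Gamma (1 - \<alpha>)) = Gamma (complex_of_real \<alpha>) * Gamma (1 - complex_of_real \<alpha>)"
    by (simp add: Gamma_complex_of_real[symmetric])
  also have "\<dots> = of_real pi / sin (of_real pi * complex_of_real \<alpha>)"
    by (rule Gamma_reflection_complex)
  also have "\<dots> = complex_of_real (pi / sin (pi * \<alpha>))"
    by (simp add: sin_of_real[symmetric])
  finally have "Gamma \<alpha> * Gamma (1 - \<alpha>) = pi / sin (pi * \<alpha>)"
    by (simp only: of_real_eq_iff)
  then show ?thesis by (simp add: Beta_def mult.commute)
qed

lemma fubini_abel:
  fixes F :: "real \<Rightarrow> real" and t \<alpha> :: real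
  assumes F: "F absolutely_integrable_on {t..1}" and t1: "t < 1" and a: "0 < \<alpha>" "\<alpha> < 1"
  shows "integral {t..1} (\<lambda>s. (s-t) powr (\<alpha>-1) * integral {s..1} (\<lambda>y. (y-s) powr (-\<alpha>) * F y))
         = Beta \<alpha> (1-\<alpha>) * integral {t..1} F"
proof -
  define \<beta> where "\<beta> = Beta \<alpha> (1-\<alpha>)"
  define G where "G y = (if y \<in> {t<..1} then F y else 0)" for y
  have Fo: "F absolutely_integrable_on {t<..1}"
    by (rule set_integrable_subset[OF F]) auto
  have GU: "G absolutely_integrable_on UNIV"
    unfolding G_def using absolutely_integrable_restrict_UNIV[of "{t<..1}" F] Fo by simp
  have Gi: "integrable lebesgue G"
    using GU by (simp add: set_integrable_def)
  have Gm: "G \<in> borel_measurable lebesgue" using Gi by auto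
  define k where "k y s = (if t \<le> s \<and> s \<le> y then (s-t) powr (\<alpha>-1) * (y-s) powr (-\<alpha>) else 0)" for y s :: real
  have k0: "k y s \<ge> 0" for y s by (simp add: k_def)
  have kle: "k y = (\<lambda>s. 0)" if "y \<le> t" for y
  proof
    fix s show "k y s = 0"
    proof (cases "t \<le> s \<and> s \<le> y")
      case True then have "s = t" using that by auto
      then show ?thesis by (simp add: k_def)
    qed (auto simp: k_def)
  qed
  have khas: "(k y has_integral \<beta>) UNIV" if "t < y" for y
  proof -
    have "((\<lambda>s. (s-t) powr (\<alpha>-1) * (y-s) powr (-\<alpha>)) has_integral \<beta>) {t..y}"
      unfolding \<beta>_def by (rule beta_sub[OF that a])
    then have "((\<lambda>s. if s \<in> {t..y} then (s-t) powr (\<alpha>-1) * (y-s) powr (-\<alpha>) else 0) has_integral \<beta>) UNIV"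
      by (simp only: has_integral_restrict_UNIV)
    then show ?thesis by (simp add: k_def[abs_def])
  qed
  have kint: "integrable lebesgue (k y)" "(\<integral>s. k y s \<partial>lebesgue) = \<beta>" if "t < y" for y
  proof -
    have "k y absolutely_integrable_on UNIV"
      using khas[OF that] k0 by (intro nonnegative_absolutely_integrable_1) auto
    then show "integrable lebesgue (k y)" by (simp add: set_integrable_def)
    then show "(\<integral>s. k y s \<partial>lebesgue) = \<beta>"
      using integral_lebesgue[of "k y"] khas[OF that] by (simp add: integral_unique)
  qed
  have km: "(\<lambda>p. k (fst p) (snd p)) \<in> borel_measurable (lebesgue \<Otimes>\<^sub>M (lebesgue :: real measure))"
  proof -
    have f: "fst \<in> borel_measurable (lebesgue \<Otimes>\<^sub>M (lebesgue :: real measure))"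
      by (rule measurable_compose[OF measurable_fst]) (rule measurable_completion, simp)
    have s: "snd \<in> borel_measurable ((lebesgue :: real measure) \<Otimes>\<^sub>M lebesgue)"
      by (rule measurable_compose[OF measurable_snd]) (rule measurable_completion, simp)
    show ?thesis unfolding k_def using f s by measurable
  qed
  define \<phi> where "\<phi> p = G (fst p) * k (fst p) (snd p)" for p :: "real \<times> real"
  have \<phi>m: "\<phi> \<in> borel_measurable (lebesgue \<Otimes>\<^sub>M lebesgue)"
  proof -
    have g: "(\<lambda>p. G (fst p)) \<in> borel_measurable ((lebesgue :: real measure) \<Otimes>\<^sub>M lebesgue)"
      by (rule measurable_compose[OF measurable_fst Gm])
    show ?thesis unfolding \<phi>_def[abs_def] using g km by measurable
  qed
  have inner_y: "(\<integral>s. \<phi> (y, s) \<partial>lebesgue) = \<beta> * G y" for y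
  proof (cases "t < y")
    case True
    then show ?thesis using kint[OF True] by (simp add: \<phi>_def)
  next
    case False
    then show ?thesis by (simp add: \<phi>_def G_def)
  qed
  have inner_y_norm: "(\<integral>s. norm (\<phi> (y, s)) \<partial>lebesgue) = \<beta> * \<bar>G y\<bar>" for y
  proof (cases "t < y")
    case True
    have "(\<integral>s. norm (\<phi> (y, s)) \<partial>lebesgue) = (\<integral>s. \<bar>G y\<bar> * k y s \<partial>lebesgue)"
      by (simp add: \<phi>_def abs_mult k0)
    then show ?thesis using kint[OF True] by (simp add: mult.commute)
  next
    case False
    then show ?thesis by (simp add: \<phi>_def G_def)
  qed
  have \<phi>int: "integrable (lebesgue \<Otimes>\<^sub>M lebesgue) \<phi>"
  proof (rule leb_pair.Fubini_integrable[OF \<phi>m])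
    show "integrable lebesgue (\<lambda>y. \<integral>s. norm (\<phi> (y, s)) \<partial>lebesgue)"
      unfolding inner_y_norm using Gi by auto
    show "AE y in lebesgue. integrable lebesgue (\<lambda>s. \<phi> (y, s))"
    proof (rule AE_I2)
      fix y show "integrable lebesgue (\<lambda>s. \<phi> (y, s))"
      proof (cases "t < y")
        case True then show ?thesis using kint(1)[OF True] by (simp add: \<phi>_def)
      next
        case False then show ?thesis by (simp add: \<phi>_def G_def)
      qed
    qed
  qed
  have \<phi>int': "integrable (lebesgue \<Otimes>\<^sub>M lebesgue) (\<lambda>(y, s). \<phi> (y, s))"
    using \<phi>int by simp
  have fub: "(\<integral>s. (\<integral>y. \<phi> (y, s) \<partial>lebesgue) \<partial>lebesgue) = (\<integral>y. (\<integral>s. \<phi> (y, s) \<partial>lebesgue) \<partial>lebesgue)"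
    using leb_pair.Fubini_integral[of "\<lambda>y s. \<phi> (y, s)", OF \<phi>int'] by simp
  have RHS: "(\<integral>y. (\<integral>s. \<phi> (y, s) \<partial>lebesgue) \<partial>lebesgue) = \<beta> * integral {t..1} F"
  proof -
    have "(\<integral>y. (\<integral>s. \<phi> (y, s) \<partial>lebesgue) \<partial>lebesgue) = \<beta> * (\<integral>y. G y \<partial>lebesgue)"
      unfolding inner_y by simp
    also have "(\<integral>y. G y \<partial>lebesgue) = integral UNIV G"
      using integral_lebesgue[OF Gi] by simp
    also have "integral UNIV G = integral {t<..1} F"
      unfolding G_def by (simp only: integral_restrict_UNIV)
    also have "integral {t<..1} F = integral {t..1} F"
      by (rule integral_spike_set) (auto intro: negligible_subset[of "{t}"])
    finally show ?thesis .
  qed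
  define \<psi> where "\<psi> s = integral {s..1} (\<lambda>y. (y-s) powr (-\<alpha>) * F y)" for s
  define T where "T s = (if s \<in> {t..1} then (s-t) powr (\<alpha>-1) * \<psi> s else 0)" for s
  have AEs: "AE s in lebesgue. integrable lebesgue (\<lambda>y. \<phi> (y, s))"
    using leb_pair.AE_integrable_snd[of "\<lambda>y s. \<phi> (y, s)", OF \<phi>int'] by simp
  then obtain N where N0: "{s \<in> space lebesgue. \<not> integrable lebesgue (\<lambda>y. \<phi> (y, s))} \<subseteq> N"
    "emeasure lebesgue N = 0" "N \<in> sets lebesgue"
    by (rule AE_E)
  have N: "N \<in> null_sets lebesgue" "\<And>s. s \<notin> N \<Longrightarrow> integrable lebesgue (\<lambda>y. \<phi> (y, s))"
    using N0 by (auto simp: null_sets_def)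
  have f1T: "(\<integral>y. \<phi> (y, s) \<partial>lebesgue) = T s" if sN: "s \<notin> N" for s
  proof -
    consider "s \<le> t" | "1 \<le> s" | "t < s" "s < 1" by linarith
    then show ?thesis
    proof cases
      case 1
      have "\<phi> (y, s) = 0" for y
      proof (cases "s < t")
        case True then show ?thesis by (simp add: \<phi>_def k_def)
      next
        case False then have "s = t" using 1 by simp
        then show ?thesis by (simp add: \<phi>_def k_def)
      qed
      moreover have "T s = 0"
      proof (cases "s < t")
        case True then show ?thesis by (simp add: T_def)
      next
        case False then have "s = t" using 1 by simp
        then show ?thesis by (simp add: T_def)
      qed
      ultimately show ?thesis by simp
    next
      case 2
      have "\<phi> (y, s) = 0" for y
      proof (cases "s \<le> y \<and> y \<le> 1")
        case True then have "y = s" using 2 by simp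
        then show ?thesis by (simp add: \<phi>_def k_def)
      next
        case False then show ?thesis using 2 by (auto simp: \<phi>_def k_def G_def)
      qed
      moreover have "T s = 0"
      proof (cases "s = 1")
        case True then show ?thesis by (simp add: T_def \<psi>_def)
      next
        case False then show ?thesis using 2 by (simp add: T_def)
      qed
      ultimately show ?thesis by simp
    next
      case 3
      define c where "c = (s-t) powr (\<alpha>-1)"
      have c: "c > 0" using 3 by (simp add: c_def)
      define H where "H y = (if y \<in> {s..1} then (y-s) powr (-\<alpha>) * F y else 0)" for y
      have \<phi>H: "\<phi> (y, s) = c * H y" for y
        using 3 by (auto simp: \<phi>_def k_def G_def H_def c_def)
      have "integrable lebesgue (\<lambda>y. c * H y)"
        using N(2)[OF sN] unfolding \<phi>H .
      then have "integrable lebesgue (\<lambda>y. (1/c) * (c * H y))"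
        by (intro integrable_mult_right) auto
      then have Hi: "integrable lebesgue H" using c by simp
      have "(\<integral>y. \<phi> (y, s) \<partial>lebesgue) = c * (\<integral>y. H y \<partial>lebesgue)"
        unfolding \<phi>H by simp
      also have "(\<integral>y. H y \<partial>lebesgue) = integral UNIV H"
        using integral_lebesgue[OF Hi] by simp
      also have "integral UNIV H = \<psi> s"
        unfolding H_def \<psi>_def by (simp only: integral_restrict_UNIV)
      finally show ?thesis using 3 by (simp add: T_def c_def)
    qed
  qed
  have f1i: "integrable lebesgue (\<lambda>s. \<integral>y. \<phi> (y, s) \<partial>lebesgue)"
    using leb_pair.integrable_snd[of "\<lambda>y s. \<phi> (y, s)", OF \<phi>int'] by simp
  have "((\<lambda>s. \<integral>y. \<phi> (y, s) \<partial>lebesgue) has_integral (\<integral>s. (\<integral>y. \<phi> (y, s) \<partial>lebesgue) \<partial>lebesgue)) UNIV"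
    by (rule has_integral_integral_lebesgue[OF f1i])
  then have "(T has_integral (\<integral>s. (\<integral>y. \<phi> (y, s) \<partial>lebesgue) \<partial>lebesgue)) UNIV"
  proof (rule has_integral_spike[rotated 2])
    show "negligible N" using N(1) by (simp add: negligible_iff_null_sets)
    show "T s = (\<integral>y. \<phi> (y, s) \<partial>lebesgue)" if "s \<in> UNIV - N" for s
      using f1T that by simp
  qed
  then have "integral {t..1} (\<lambda>s. (s-t) powr (\<alpha>-1) * \<psi> s) = (\<integral>s. (\<integral>y. \<phi> (y, s) \<partial>lebesgue) \<partial>lebesgue)"
    unfolding T_def by (simp only: has_integral_restrict_UNIV integral_unique)
  then show ?thesis
    using fub RHS by (simp add: \<psi>_def \<beta>_def)
qed

lemma key_identity:
  fixes \<alpha> :: real and K :: "real \<Rightarrow> real \<Rightarrow> real" and a b f :: "real \<Rightarrow> real"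
  assumes a01: "0 < \<alpha>" "\<alpha> < 1"
    and Kab: "\<forall>(x, y) \<in> Delta. K x y = a x * b y"
    and anz: "\<And>x. x \<in> {0..1} \<Longrightarrow> a x \<noteq> 0"
    and bf: "(\<lambda>y. b y * f y) absolutely_integrable_on {0..1}"
    and t: "0 \<le> t" "t < 1"
  shows "frac_int (1 - \<alpha>) (\<lambda>s u. 1 / a u) (frac_int \<alpha> K f) t
         = c_const \<alpha> * integral {t..1} (\<lambda>y. b y * f y)"
proof -
  define \<psi> where "\<psi> s = integral {s..1} (\<lambda>y. (y-s) powr (-\<alpha>) * (b y * f y))" for s
  have inner: "(s - t) powr (- (1 - \<alpha>)) * (1 / a s) * frac_int \<alpha> K f s = (s-t) powr (\<alpha>-1) * \<psi> s"
    if s: "s \<in> {t..1}" for s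
  proof (cases "s = 1")
    case True then show ?thesis by (simp add: frac_int_def \<psi>_def)
  next
    case False
    have "frac_int \<alpha> K f s = integral {s..1} (\<lambda>y. (y - s) powr (- \<alpha>) * K s y * f y)"
      using False by (simp add: frac_int_def)
    also have "\<dots> = integral {s..1} (\<lambda>y. a s * ((y-s) powr (-\<alpha>) * (b y * f y)))"
    proof (rule integral_cong)
      fix y assume y: "y \<in> {s..1}"
      then have "(s, y) \<in> Delta" using s t by (auto simp: Delta_def)
      then have "K s y = a s * b y" using Kab by auto
      then show "(y - s) powr (- \<alpha>) * K s y * f y = a s * ((y-s) powr (-\<alpha>) * (b y * f y))"
        by simp
    qed
    also have "\<dots> = a s * \<psi> s" by (simp add: \<psi>_def)
    finally have "frac_int \<alpha> K f s = a s * \<psi> s" .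
    moreover have "a s \<noteq> 0" using anz s t by auto
    ultimately show ?thesis by simp
  qed
  have "frac_int (1 - \<alpha>) (\<lambda>s u. 1 / a u) (frac_int \<alpha> K f) t
      = integral {t..1} (\<lambda>s. (s - t) powr (- (1 - \<alpha>)) * (1 / a s) * frac_int \<alpha> K f s)"
    using t by (simp add: frac_int_def)
  also have "\<dots> = integral {t..1} (\<lambda>s. (s-t) powr (\<alpha>-1) * \<psi> s)"
    by (rule integral_cong) (rule inner)
  also have "\<dots> = Beta \<alpha> (1-\<alpha>) * integral {t..1} (\<lambda>y. b y * f y)"
    unfolding \<psi>_def
    by (rule fubini_abel[OF _ t(2) a01]) (rule set_integrable_subset[OF bf]; use t in auto)
  also have "Beta \<alpha> (1-\<alpha>) = c_const \<alpha>"
    using beta_reflect[OF a01] by (simp add: c_const_def)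
  finally show ?thesis .
qed

theorem proposition2p5:
  fixes \<alpha> :: real and K :: "real \<Rightarrow> real \<Rightarrow> real" and a b :: "real \<Rightarrow> real"
  assumes "0 < \<alpha>" "\<alpha> < 1"
    and "continuous_on Delta (\<lambda>(x, y). K x y)"
    and "\<forall>(x, y) \<in> Delta. K x y \<noteq> 0"
    and "\<forall>(x, y) \<in> Delta. K x y = a x * b y"
  shows "(\<forall>f g. f absolutely_integrable_on {0..1} \<longrightarrow> g absolutely_integrable_on {0..1} \<longrightarrow>
            (AE x in lborel. x \<in> {0..1} \<longrightarrow> frac_int \<alpha> K f x = frac_int \<alpha> K g x) \<longrightarrow>
            (AE x in lborel. x \<in> {0..1} \<longrightarrow> f x = g x))
       \<and> (\<forall>f. f absolutely_integrable_on {0..1} \<longrightarrow>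
            (AE x in lborel. x \<in> {0<..<1} \<longrightarrow>
               (\<exists>D. ((\<lambda>t. frac_int (1 - \<alpha>) (\<lambda>s u. 1 / a u) (frac_int \<alpha> K f) t)
                        has_real_derivative D) (at x)
                    \<and> f x = - (1 / b x) * (1 / c_const \<alpha>) * D)))"
proof -
  note a01 = assms(1,2)
  have Knz: "K x y \<noteq> 0" if "(x,y) \<in> Delta" for x y using assms(4) that by auto
  have Kab: "K x y = a x * b y" if "(x,y) \<in> Delta" for x y using assms(5) that by auto
  have anz: "a x \<noteq> 0" if "x \<in> {0..1}" for x
  proof -
    have "(x, 1) \<in> Delta" using that by (auto simp: Delta_def)
    then show ?thesis using Knz Kab by fastforce
  qed
  have bnz: "b y \<noteq> 0" if "y \<in> {0..1}" for y
  proof -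
    have "(0, y) \<in> Delta" using that by (auto simp: Delta_def)
    then show ?thesis using Knz Kab by fastforce
  qed
  have bcont: "continuous_on {0..1} b"
  proof -
    have "continuous_on {0..1} (\<lambda>y. (\<lambda>(x, y). K x y) (0::real, y))"
    proof (rule continuous_on_compose2[OF assms(3)])
      show "continuous_on {0..1} (\<lambda>y. (0::real, y))" by (intro continuous_intros)
      show "(\<lambda>y. (0::real, y)) ` {0..1} \<subseteq> Delta" by (auto simp: Delta_def)
    qed
    then have "continuous_on {0..1} (\<lambda>y. K 0 y / a 0)"
      using anz[of 0] by (intro continuous_intros) auto
    moreover have "K 0 y / a 0 = b y" if "y \<in> {0..1}" for y
    proof -
      have "(0, y) \<in> Delta" using that by (auto simp: Delta_def)
      then show ?thesis using Kab anz[of 0] by simp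
    qed
    ultimately show ?thesis using continuous_on_cong by (metis (no_types, lifting))
  qed
  have bf_ai: "(\<lambda>y. b y * f y) absolutely_integrable_on {0..1}"
    if f: "f absolutely_integrable_on {0..1}" for f
  proof (rule absolutely_integrable_bounded_measurable_product_real[OF _ _ _ f])
    show "b \<in> borel_measurable (lebesgue_on {0..1})"
      by (rule continuous_imp_measurable_on_sets_lebesgue[OF bcont]) simp
    show "{0..1::real} \<in> sets lebesgue" by simp
    show "bounded (b ` {0..1})"
      by (rule compact_imp_bounded, rule compact_continuous_image[OF bcont]) simp
  qed
  have cpos: "c_const \<alpha> > 0"
  proof -
    have "sin (\<alpha> * pi) > 0" using a01 by (intro sin_gt_zero) auto
    then show ?thesis by (simp add: c_const_def)
  qed
  have KEY: "frac_int (1 - \<alpha>) (\<lambda>s u. 1 / a u) (frac_int \<alpha> K f) t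
         = c_const \<alpha> * integral {t..1} (\<lambda>y. b y * f y)"
    if "f absolutely_integrable_on {0..1}" "0 \<le> t" "t < 1" for f t
    by (rule key_identity[OF a01 assms(5) anz bf_ai[OF that(1)] that(2,3)])
  have DER: "AE x in lborel. x \<in> {0<..<1} \<longrightarrow>
     ((\<lambda>t. frac_int (1 - \<alpha>) (\<lambda>s u. 1 / a u) (frac_int \<alpha> K f) t) has_real_derivative
        c_const \<alpha> * - (b x * f x)) (at x)"
    if f: "f absolutely_integrable_on {0..1}" for f
  proof -
    have "AE x in lborel. x \<in> {0<..<1} \<longrightarrow>
        ((\<lambda>t. integral {t..1} (\<lambda>y. b y * f y)) has_real_derivative - (b x * f x)) (at x)"
      by (rule lebesgue_diff[OF bf_ai[OF f]])
    then show ?thesis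
    proof (rule AE_mp, intro AE_I2 impI)
      fix x :: real assume x: "x \<in> {0<..<1}"
        and d: "x \<in> {0<..<1} \<longrightarrow> ((\<lambda>t. integral {t..1} (\<lambda>y. b y * f y)) has_real_derivative - (b x * f x)) (at x)"
      have "((\<lambda>t. c_const \<alpha> * integral {t..1} (\<lambda>y. b y * f y)) has_real_derivative c_const \<alpha> * - (b x * f x)) (at x)"
        using d x by (intro DERIV_cmult) auto
      then show "((\<lambda>t. frac_int (1 - \<alpha>) (\<lambda>s u. 1 / a u) (frac_int \<alpha> K f) t) has_real_derivative
        c_const \<alpha> * - (b x * f x)) (at x)"
      proof (rule has_field_derivative_transform_within_open[where S="{0<..<1}"])
        show "open {0<..<(1::real)}" by simp
        show "x \<in> {0<..<1}" using x .
        fix y :: real assume "y \<in> {0<..<1}"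
        then show "c_const \<alpha> * integral {y..1} (\<lambda>y. b y * f y) = frac_int (1 - \<alpha>) (\<lambda>s u. 1 / a u) (frac_int \<alpha> K f) y"
          using KEY[OF f, of y] by simp
      qed
    qed
  qed
  show ?thesis
  proof (intro conjI allI impI)
    fix f g :: "real \<Rightarrow> real" assume f: "f absolutely_integrable_on {0..1}" and g: "g absolutely_integrable_on {0..1}"
      and eq: "AE x in lborel. x \<in> {0..1} \<longrightarrow> frac_int \<alpha> K f x = frac_int \<alpha> K g x"
    from eq obtain N where N0: "{x \<in> space lborel. \<not> (x \<in> {0..1} \<longrightarrow> frac_int \<alpha> K f x = frac_int \<alpha> K g x)} \<subseteq> N"
      "emeasure lborel N = 0" "N \<in> sets lborel"
      by (rule AE_E)
    have Nneg: "negligible N"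
    proof -
      have "N \<in> null_sets lborel" using N0 by (simp add: null_sets_def)
      then have "N \<in> null_sets lebesgue" by (rule null_sets_completionI)
      then show ?thesis by (simp add: negligible_iff_null_sets)
    qed
    have same: "frac_int (1 - \<alpha>) (\<lambda>s u. 1 / a u) (frac_int \<alpha> K f) t =
                frac_int (1 - \<alpha>) (\<lambda>s u. 1 / a u) (frac_int \<alpha> K g) t" if t: "0 \<le> t" "t < 1" for t
    proof -
      have "integral {t..1} (\<lambda>s. (s - t) powr (- (1 - \<alpha>)) * (1 / a s) * frac_int \<alpha> K f s)
          = integral {t..1} (\<lambda>s. (s - t) powr (- (1 - \<alpha>)) * (1 / a s) * frac_int \<alpha> K g s)"
      proof (rule integral_spike[OF Nneg])
        fix s assume s: "s \<in> {t..1} - N"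
        show "(s - t) powr (- (1 - \<alpha>)) * (1 / a s) * frac_int \<alpha> K g s =
                   (s - t) powr (- (1 - \<alpha>)) * (1 / a s) * frac_int \<alpha> K f s"
        proof (cases "frac_int \<alpha> K f s = frac_int \<alpha> K g s")
          case False
          then have "s \<in> {x \<in> space lborel. \<not> (x \<in> {0..1} \<longrightarrow> frac_int \<alpha> K f x = frac_int \<alpha> K g x)}"
            using s t by auto
          then have "s \<in> N" using N0(1) by blast
          then show ?thesis using s by simp
        qed simp
      qed
      then show ?thesis using t by (simp add: frac_int_def)
    qed
    have Ieq: "integral {t..1} (\<lambda>y. b y * f y) = integral {t..1} (\<lambda>y. b y * g y)"
      if t: "0 \<le> t" "t < 1" for t
      using same[OF t] KEY[OF f t] KEY[OF g t] cpos by simp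
    have "AE x in lborel. x \<in> {0<..<1} \<longrightarrow> f x = g x"
      using lebesgue_diff[OF bf_ai[OF f]] lebesgue_diff[OF bf_ai[OF g]]
    proof (rule AE_mp[OF AE_conjI], intro AE_I2 impI)
      fix x :: real assume x: "x \<in> {0<..<1}"
        and d: "(x \<in> {0<..<1} \<longrightarrow> ((\<lambda>t. integral {t..1} (\<lambda>y. b y * f y)) has_real_derivative - (b x * f x)) (at x)) \<and>
                (x \<in> {0<..<1} \<longrightarrow> ((\<lambda>t. integral {t..1} (\<lambda>y. b y * g y)) has_real_derivative - (b x * g x)) (at x))"
      have df: "((\<lambda>t. integral {t..1} (\<lambda>y. b y * g y)) has_real_derivative - (b x * f x)) (at x)"
      proof (rule has_field_derivative_transform_within_open[where S="{0<..<1}"])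
        show "((\<lambda>t. integral {t..1} (\<lambda>y. b y * f y)) has_real_derivative - (b x * f x)) (at x)"
          using d x by blast
        show "open {0<..<(1::real)}" by simp
        show "x \<in> {0<..<1}" using x .
        fix y :: real assume "y \<in> {0<..<1}"
        then show "integral {y..1} (\<lambda>y. b y * f y) = integral {y..1} (\<lambda>y. b y * g y)"
          using Ieq by simp
      qed
      have "- (b x * f x) = - (b x * g x)"
        using DERIV_unique[OF df] d x by blast
      then show "f x = g x" using bnz x by simp
    qed
    moreover have "AE x in lborel. x \<noteq> 0" by (rule AE_lborel_singleton)
    moreover have "AE x in lborel. x \<noteq> 1" by (rule AE_lborel_singleton)
    ultimately show "AE x in lborel. x \<in> {0..1} \<longrightarrow> f x = g x"
      by eventually_elim auto
  next
    fix f :: "real \<Rightarrow> real" assume f: "f absolutely_integrable_on {0..1}"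
    show "AE x in lborel. x \<in> {0<..<1} \<longrightarrow>
               (\<exists>D. ((\<lambda>t. frac_int (1 - \<alpha>) (\<lambda>s u. 1 / a u) (frac_int \<alpha> K f) t)
                        has_real_derivative D) (at x)
                    \<and> f x = - (1 / b x) * (1 / c_const \<alpha>) * D)"
      using DER[OF f]
    proof (rule AE_mp, intro AE_I2 impI)
      fix x :: real assume x: "x \<in> {0<..<1}"
        and d: "x \<in> {0<..<1} \<longrightarrow> ((\<lambda>t. frac_int (1 - \<alpha>) (\<lambda>s u. 1 / a u) (frac_int \<alpha> K f) t) has_real_derivative
        c_const \<alpha> * - (b x * f x)) (at x)"
      have "b x \<noteq> 0" using bnz x by auto
      then have "f x = - (1 / b x) * (1 / c_const \<alpha>) * (c_const \<alpha> * - (b x * f x))"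
        using cpos by (simp add: field_simps)
      then show "\<exists>D. ((\<lambda>t. frac_int (1 - \<alpha>) (\<lambda>s u. 1 / a u) (frac_int \<alpha> K f) t)
                        has_real_derivative D) (at x)
                    \<and> f x = - (1 / b x) * (1 / c_const \<alpha>) * D"
        using d x by blast
    qed
  qed
qed

end
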